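(* For all integers $m\ge1$ and $n\ge1$, $$M(\mathcal G(m,-2-n))=\epsilon_{m,n}\,T(m,n),$$ where $T(m,n)$ is the number of perfect matchings of the $m$-by-$n$ grid graph and $\epsilon_{m,n}=-1$ if $m\equiv2\pmod 4$ and $n$ is odd, $\epsilon_{m,n}=+1$ otherwise. Moreover, every perfect matching of $\mathcal G(m,-2-n)$ has the same sign $\epsilon_{m,n}$.
   Context: Grid conventions: an $m$-by-$N$ grid has vertices $(i,j)$, $1\le i\le m$ (rows), $1\le j\le N$ (columns); horizontal edges join $(i,j),(i,j+1)$, vertical edges join $(i,j),(i+1,j)$. A signed graph is a graph each of whose edges carries a sign $+1$ or $-1$. For a signed graph $\mathcal G$, $M(\mathcal G)$ denotes the sum over all perfect matchings of $\mathcal G$ of the product of the signs of the edges in the matching. For $n\le 0$, $\mathcal G(m,n)$ has the vertex set of the $m$-by-$(2-n)$ grid, all horizontal edges of that grid with sign $+1$, the vertical edges lying in columns $2,3,\dots,1-n$ with sign $-1$, and no vertical edges in columns $1$ and $2-n$. *)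

theory Defs
  imports Main
begin

type_synonym vertex = "nat \<times> nat"
type_synonym edge = "vertex set"

text \<open>A signed graph: vertex set, edge set (edges are 2-element vertex sets), sign function.\<close>
type_synonym signed_graph = "vertex set \<times> edge set \<times> (edge \<Rightarrow> int)"

definition perfect_matchings :: "vertex set \<Rightarrow> edge set \<Rightarrow> edge set set" where
  "perfect_matchings V E = {M. M \<subseteq> E \<and> (\<forall>v\<in>V. \<exists>!e. e \<in> M \<and> v \<in> e)}"

definition grid_vertices :: "nat \<Rightarrow> nat \<Rightarrow> vertex set" where
  "grid_vertices m N = {1..m} \<times> {1..N}"

definition horiz_edges :: "nat \<Rightarrow> nat \<Rightarrow> edge set" where
  "horiz_edges m N = {{(i,j),(i,j+1)} | i j. 1 \<le> i \<and> i \<le> m \<and> 1 \<le> j \<and> j + 1 \<le> N}"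

definition vert_edges :: "nat \<Rightarrow> nat \<Rightarrow> nat set \<Rightarrow> edge set" where
  "vert_edges m N C = {{(i,j),(i+1,j)} | i j. 1 \<le> i \<and> i + 1 \<le> m \<and> 1 \<le> j \<and> j \<le> N \<and> j \<in> C}"

definition grid_edges :: "nat \<Rightarrow> nat \<Rightarrow> edge set" where
  "grid_edges m N = horiz_edges m N \<union> vert_edges m N UNIV"

definition T :: "nat \<Rightarrow> nat \<Rightarrow> nat" where
  "T m n = card (perfect_matchings (grid_vertices m n) (grid_edges m n))"

definition matching_sign :: "signed_graph \<Rightarrow> edge set \<Rightarrow> int" where
  "matching_sign G M = (\<Prod>e\<in>M. (snd (snd G)) e)"

definition M_signed :: "signed_graph \<Rightarrow> int" where
  "M_signed G = (\<Sum>M\<in>perfect_matchings (fst G) (fst (snd G)). matching_sign G M)"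

definition signed_pms :: "signed_graph \<Rightarrow> edge set set" where
  "signed_pms G = perfect_matchings (fst G) (fst (snd G))"

text \<open>The signed graph G(m,n) for n \<le> 0 (on the m-by-(2-n) grid); for n > 0 left unspecified
  (only used with n \<le> 0).\<close>
definition calG :: "nat \<Rightarrow> int \<Rightarrow> signed_graph" where
  "calG m n = (let N = nat (2 - n) in
     (grid_vertices m N,
      horiz_edges m N \<union> vert_edges m N {2 .. nat (1 - n)},
      (\<lambda>e. if e \<in> horiz_edges m N then 1 else -1)))"

definition eps :: "nat \<Rightarrow> nat \<Rightarrow> int" where
  "eps m n = (if m mod 4 = 2 \<and> odd n then -1 else 1)"

end

theory Submission
  imports Defs
begin



lemma calG_eq: "calG m (-2 - int n) = (grid_vertices m (n+4), horiz_edges m (n+4) \<union> vert_edges m (n+4) {2..n+3},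
   (\<lambda>e. if e \<in> horiz_edges m (n+4) then 1 else -1))"
proof -
  have h1: "nat (2 - (-2 - int n)) = n + 4" by simp
  have h2: "nat (1 - (-2 - int n)) = n + 3" by simp
  show ?thesis unfolding calG_def Let_def h1 h2 by simp
qed

lemma pm_disj: assumes "M \<in> perfect_matchings V E" "e1 \<in> M" "e2 \<in> M" "v \<in> e1" "v \<in> e2" "v \<in> V"
  shows "e1 = e2"
  using assms unfolding perfect_matchings_def by blast

lemma pm_cover_card:
  assumes pm: "M \<in> perfect_matchings V E" and fin: "finite V" and sub: "\<forall>e\<in>E. e \<subseteq> V" and S: "S \<subseteq> V"
  shows "card S = (\<Sum>e\<in>M. card (e \<inter> S))"
proof -
  have ME: "M \<subseteq> E" using pm unfolding perfect_matchings_def by blast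
  have "E \<subseteq> Pow V" using sub by blast
  moreover have "finite (Pow V)" using fin by simp
  ultimately have "finite E" by (rule finite_subset)
  hence finM: "finite M" using ME by (rule finite_subset[rotated])
  have SU: "S = (\<Union>e\<in>M. e \<inter> S)"
  proof
    show "S \<subseteq> (\<Union>e\<in>M. e \<inter> S)"
    proof
      fix v assume "v \<in> S"
      then have "v \<in> V" using S by blast
      then obtain e where "e \<in> M" "v \<in> e" using pm unfolding perfect_matchings_def by blast
      then show "v \<in> (\<Union>e\<in>M. e \<inter> S)" using \<open>v \<in> S\<close> by blast
    qed
  qed blast
  have "card (\<Union>e\<in>M. e \<inter> S) = (\<Sum>e\<in>M. card (e \<inter> S))"
  proof (rule card_UN_disjoint[OF finM])
    have "finite S" using fin S by (rule finite_subset[rotated])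
    then show "\<forall>i\<in>M. finite (i \<inter> S)" by simp
    show "\<forall>i\<in>M. \<forall>j\<in>M. i \<noteq> j \<longrightarrow> i \<inter> S \<inter> (j \<inter> S) = {}"
    proof (intro ballI impI)
      fix i j assume ij: "i \<in> M" "j \<in> M" "i \<noteq> j"
      show "i \<inter> S \<inter> (j \<inter> S) = {}"
      proof (rule ccontr)
        assume "i \<inter> S \<inter> (j \<inter> S) \<noteq> {}"
        then obtain v where v: "v \<in> i" "v \<in> j" "v \<in> S" by blast
        then have "v \<in> V" using S by blast
        then show False using pm_disj[OF pm ij(1,2) v(1,2)] ij(3) by blast
      qed
    qed
  qed
  then show ?thesis using SU by simp
qed




lemma horiz_sub: "e \<in> horiz_edges m N \<Longrightarrow> e \<subseteq> grid_vertices m N"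
  unfolding horiz_edges_def grid_vertices_def by auto
lemma vert_sub: "e \<in> vert_edges m N C \<Longrightarrow> e \<subseteq> grid_vertices m N"
  unfolding vert_edges_def grid_vertices_def by auto

lemma card_odd: "card {i\<in>{1..m::nat}. odd i} = (m+1) div 2"
proof (induction m)
  case 0 then show ?case by simp
next
  case (Suc m)
  have "{i\<in>{1..Suc m}. odd i} = {i\<in>{1..m}. odd i} \<union> (if odd (Suc m) then {Suc m} else {})"
    by (auto simp: le_Suc_eq)
  then show ?case using Suc by (auto simp: card_insert_if)
qed

lemma sign_calG:
  assumes M: "M \<in> perfect_matchings (grid_vertices m (n+4)) (horiz_edges m (n+4) \<union> vert_edges m (n+4) {2..n+3})"
  shows "(\<Prod>e\<in>M. (if e \<in> horiz_edges m (n+4) then 1 else -1::int)) = eps m n"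
proof -
  define H where "H = horiz_edges m (n+4)"
  define V where "V = grid_vertices m (n+4)"
  define Ve where "Ve = vert_edges m (n+4) {2..n+3}"
  have M': "M \<in> perfect_matchings V (H \<union> Ve)" using M by (simp add: H_def V_def Ve_def)
  have ME: "M \<subseteq> H \<union> Ve" using M' unfolding perfect_matchings_def by blast
  have finV: "finite V" unfolding V_def grid_vertices_def by simp
  have sub: "\<forall>e\<in>H \<union> Ve. e \<subseteq> V" using horiz_sub vert_sub H_def Ve_def V_def by blast
  have "H \<union> Ve \<subseteq> Pow V" using sub by blast
  moreover have "finite (Pow V)" using finV by simp
  ultimately have "finite (H \<union> Ve)" by (rule finite_subset)
  hence finM: "finite M" using ME by (rule finite_subset[rotated])
  define S where "S = {v\<in>V. odd (fst v)}"
  have SV: "S \<subseteq> V" unfolding S_def by blast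
  have S_eq: "S = {i\<in>{1..m}. odd i} \<times> {1..n+4}" unfolding S_def V_def grid_vertices_def by auto
  have cardS: "card S = ((m+1) div 2) * (n+4)" unfolding S_eq card_cartesian_product card_odd by simp
  have c1: "card S = (\<Sum>e\<in>M. card (e \<inter> S))" by (rule pm_cover_card[OF M' finV sub SV])
  also have "\<dots> = (\<Sum>e\<in>M \<inter> H. card (e \<inter> S)) + (\<Sum>e\<in>M - H. card (e \<inter> S))"
    using finM by (metis Diff_eq sum.Int_Diff)
  also have "(\<Sum>e\<in>M - H. card (e \<inter> S)) = (\<Sum>e\<in>M - H. 1)"
  proof (rule sum.cong)
    fix e assume "e \<in> M - H"
    then have "e \<in> Ve" using ME by blast
    then obtain i j where e: "e = {(i,j),(i+1,j)}" "1 \<le> i" "i+1 \<le> m" "1 \<le> j" "j \<le> n+4"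
      unfolding Ve_def vert_edges_def by blast
    have "e \<inter> S = (if odd i then {(i,j)} else {(i+1,j)})"
      using e unfolding S_def V_def grid_vertices_def by auto
    then show "card (e \<inter> S) = 1" by simp
  qed simp
  also have "(\<Sum>e\<in>M - H. (1::nat)) = card (M - H)" by simp
  finally have cS: "card S = (\<Sum>e\<in>M \<inter> H. card (e \<inter> S)) + card (M - H)" .
  have ev: "even (\<Sum>e\<in>M \<inter> H. card (e \<inter> S))"
  proof (rule dvd_sum)
    fix e assume "e \<in> M \<inter> H"
    then obtain i j where e: "e = {(i,j),(i,j+1)}" "1 \<le> i" "i \<le> m" "1 \<le> j" "j+1 \<le> n+4"
      unfolding H_def horiz_edges_def by blast
    have "e \<inter> S = (if odd i then e else {})"
      using e unfolding S_def V_def grid_vertices_def by auto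
    then show "even (card (e \<inter> S))" using e by simp
  qed
  have par: "even (card (M - H)) \<longleftrightarrow> even (((m+1) div 2) * (n+4))"
    using cS ev cardS by auto
  have mn: "\<not> (odd m \<and> odd n)"
  proof
    assume o: "odd m \<and> odd n"
    have "card V = (\<Sum>e\<in>M. card (e \<inter> V))" by (rule pm_cover_card[OF M' finV sub order_refl])
    also have "\<dots> = (\<Sum>e\<in>M. 2)"
    proof (rule sum.cong)
      fix e assume "e \<in> M"
      then have "e \<in> H \<union> Ve" using ME by blast
      then have "e \<subseteq> V \<and> card e = 2" using sub
        unfolding H_def Ve_def horiz_edges_def vert_edges_def by auto
      then show "card (e \<inter> V) = 2" by (simp add: Int_absorb2)
    qed simp
    finally have "even (card V)" by simp
    moreover have "card V = m * (n+4)" unfolding V_def grid_vertices_def by (simp add: card_cartesian_product)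
    ultimately show False using o by simp
  qed
  have prod: "(\<Prod>e\<in>M. (if e \<in> H then 1 else -1::int)) = (-1) ^ card (M - H)"
    using finM by (simp add: prod.If_cases Diff_eq)
  have key: "even (card (M - H)) \<longleftrightarrow> \<not> (m mod 4 = 2 \<and> odd n)"
  proof -
    consider "odd m" "even n" | "even m" using mn by blast
    then show ?thesis
    proof cases
      case 1
      then show ?thesis using par by (auto simp: mod_mod_cancel)
    next
      case 2
      then obtain k where k: "m = 2*k" by blast
      have "(m+1) div 2 = k" using k by simp
      then show ?thesis using par k by (auto, presburger+)
    qed
  qed
  show ?thesis using prod key unfolding eps_def H_def[symmetric]
    by (auto simp: neg_one_even_power neg_one_odd_power)
qed




definition shiftE :: "nat \<Rightarrow> edge \<Rightarrow> edge" where "shiftE k e = (\<lambda>(i,j). (i, j+k)) ` e"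
definition unshiftE :: "nat \<Rightarrow> edge \<Rightarrow> edge" where "unshiftE k e = (\<lambda>(i,j). (i, j-k)) ` e"
definition Fset :: "nat \<Rightarrow> nat \<Rightarrow> edge set" where
  "Fset m n = {{(i,1),(i,2)} | i. 1\<le>i \<and> i\<le>m} \<union> {{(i,n+3),(i,n+4)} | i. 1\<le>i \<and> i\<le>m}"
definition mid :: "nat \<Rightarrow> edge \<Rightarrow> bool" where "mid n e = (\<forall>v\<in>e. 3 \<le> snd v \<and> snd v \<le> n+2)"
definition gmap where "gmap m n P = shiftE 2 ` P \<union> Fset m n"
definition fmap where "fmap n M = unshiftE 2 ` {e\<in>M. mid n e}"

lemma mem_shift: "(a,b) \<in> shiftE k e \<longleftrightarrow> k \<le> b \<and> (a,b-k) \<in> e"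
  unfolding shiftE_def by force

lemma mem_unshift: "\<forall>v\<in>e. k \<le> snd v \<Longrightarrow> (a,b) \<in> unshiftE k e \<longleftrightarrow> (a,b+k) \<in> e"
  unfolding unshiftE_def by force

lemma unshift_shift: "unshiftE k (shiftE k e) = e"
  unfolding unshiftE_def shiftE_def image_image by (simp add: case_prod_beta)

lemma shift_unshift: assumes "\<forall>v\<in>e. k \<le> snd v" shows "shiftE k (unshiftE k e) = e"
proof -
  have "\<forall>v\<in>e. (\<lambda>(i,j). (i, j+k)) ((\<lambda>(i,j). (i, j-k)) v) = v" using assms by auto
  then have "(\<lambda>v. (\<lambda>(i,j). (i, j+k)) ((\<lambda>(i,j). (i, j-k)) v)) ` e = (\<lambda>v. v) ` e"
    by (intro image_cong) auto
  then show ?thesis unfolding unshiftE_def shiftE_def image_image by simp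
qed

lemma shift2: "shiftE k {x, y} = {(fst x, snd x + k), (fst y, snd y + k)}"
  unfolding shiftE_def by (simp add: case_prod_beta)
lemma unshift2: "unshiftE k {x, y} = {(fst x, snd x - k), (fst y, snd y - k)}"
  unfolding unshiftE_def by (simp add: case_prod_beta)

lemma grid_edge_cases:
  assumes "e \<in> grid_edges m n"
  obtains i j where "e = {(i,j),(i,j+1)}" "1\<le>i" "i\<le>m" "1\<le>j" "j+1\<le>n"
    | i j where "e = {(i,j),(i+1,j)}" "1\<le>i" "i+1\<le>m" "1\<le>j" "j\<le>n"
  using assms unfolding grid_edges_def horiz_edges_def vert_edges_def by blast

lemma E'_cases:
  assumes "e \<in> horiz_edges m N \<union> vert_edges m N C"
  obtains i j where "e = {(i,j),(i,j+1)}" "1\<le>i" "i\<le>m" "1\<le>j" "j+1\<le>N"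
    | i j where "e = {(i,j),(i+1,j)}" "1\<le>i" "i+1\<le>m" "1\<le>j" "j\<le>N" "j \<in> C"
  using assms unfolding horiz_edges_def vert_edges_def by blast

lemma grid_edge_cols: "e \<in> grid_edges m n \<Longrightarrow> v \<in> e \<Longrightarrow> 1 \<le> fst v \<and> fst v \<le> m \<and> 1 \<le> snd v \<and> snd v \<le> n"
  by (erule grid_edge_cases) auto

lemma horiz_mem: "1\<le>i \<Longrightarrow> i\<le>m \<Longrightarrow> 1\<le>j \<Longrightarrow> j+1\<le>N \<Longrightarrow> {(i,j),(i,j+1)} \<in> horiz_edges m N"
  unfolding horiz_edges_def by blast
lemma vert_mem: "1\<le>i \<Longrightarrow> i+1\<le>m \<Longrightarrow> 1\<le>j \<Longrightarrow> j\<le>N \<Longrightarrow> j\<in>C \<Longrightarrow> {(i,j),(i+1,j)} \<in> vert_edges m N C"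
  unfolding vert_edges_def by blast

lemma gmap_pm:
  assumes P: "P \<in> perfect_matchings (grid_vertices m n) (grid_edges m n)" and n: "n \<ge> 1"
  shows "gmap m n P \<in> perfect_matchings (grid_vertices m (n+4)) (horiz_edges m (n+4) \<union> vert_edges m (n+4) {2..n+3})"
proof -
  have PE: "P \<subseteq> grid_edges m n" using P unfolding perfect_matchings_def by blast
  have cols: "\<And>e v. e \<in> P \<Longrightarrow> v \<in> e \<Longrightarrow> 1 \<le> fst v \<and> fst v \<le> m \<and> 1 \<le> snd v \<and> snd v \<le> n"
    using PE grid_edge_cols by blast
  have sub: "gmap m n P \<subseteq> horiz_edges m (n+4) \<union> vert_edges m (n+4) {2..n+3}"
  proof
    fix e assume "e \<in> gmap m n P"
    then consider "e \<in> shiftE 2 ` P" | "e \<in> Fset m n" unfolding gmap_def by blast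
    then show "e \<in> horiz_edges m (n+4) \<union> vert_edges m (n+4) {2..n+3}"
    proof cases
      case 1
      then obtain e' where e': "e' \<in> P" "e = shiftE 2 e'" by blast
      then have "e' \<in> grid_edges m n" using PE by blast
      then show ?thesis
      proof (cases rule: grid_edge_cases)
        case (1 i j)
        then have "e = {(i,j+2),(i,(j+2)+1)}" using e' by (simp add: shift2)
        then have "e \<in> horiz_edges m (n+4)" using horiz_mem[of i m "j+2" "n+4"] 1 by simp
        then show ?thesis by blast
      next
        case (2 i j)
        then have "e = {(i,j+2),(i+1,(j+2))}" using e' by (simp add: shift2)
        then have "e \<in> vert_edges m (n+4) {2..n+3}" using vert_mem[of i m "j+2" "n+4" "{2..n+3}"] 2 by simp
        then show ?thesis by blast
      qed
    next
      case 2
      then obtain i where i: "1 \<le> i" "i \<le> m" "e = {(i,1),(i,2)} \<or> e = {(i,n+3),(i,n+4)}"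
        unfolding Fset_def by blast
      have h1: "{(i,1),(i,2)} \<in> horiz_edges m (n+4)"
        using horiz_mem[of i m 1 "n+4"] i by (simp add: numeral_2_eq_2)
      have h2: "{(i,n+3),(i,n+4)} \<in> horiz_edges m (n+4)"
        using horiz_mem[of i m "n+3" "n+4"] i by (simp add: ac_simps)
      have "e \<in> horiz_edges m (n+4)" using i(3) h1 h2 by auto
      then show ?thesis by blast
    qed
  qed
  have cov: "\<exists>!e. e \<in> gmap m n P \<and> v \<in> e" if v: "v \<in> grid_vertices m (n+4)" for v
  proof -
    obtain i j where ij: "v = (i,j)" "1 \<le> i" "i \<le> m" "1 \<le> j" "j \<le> n+4"
      using v unfolding grid_vertices_def by auto
    have notsh: "e \<notin> shiftE 2 ` P" if "v \<in> e" "j \<le> 2 \<or> j \<ge> n+3" for e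
    proof
      assume "e \<in> shiftE 2 ` P"
      then obtain e' where "e' \<in> P" "e = shiftE 2 e'" by blast
      then show False using that cols[of e' "(i, j-2)"] ij by (auto simp: mem_shift)
    qed
    consider "j \<le> 2" | "j \<ge> n+3" | "3 \<le> j" "j \<le> n+2" by linarith
    then show ?thesis
    proof cases
      case 1
      show ?thesis
      proof (rule ex1I[of _ "{(i,1),(i,2)}"])
        show "{(i,1),(i,2)} \<in> gmap m n P \<and> v \<in> {(i,1),(i,2)}"
          using ij 1 unfolding gmap_def Fset_def by auto
        fix e assume e: "e \<in> gmap m n P \<and> v \<in> e"
        then have "e \<in> Fset m n" using notsh 1 unfolding gmap_def by blast
        then show "e = {(i,1),(i,2)}" using e ij 1 n unfolding Fset_def by auto
      qed
    next
      case 2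
      show ?thesis
      proof (rule ex1I[of _ "{(i,n+3),(i,n+4)}"])
        show "{(i,n+3),(i,n+4)} \<in> gmap m n P \<and> v \<in> {(i,n+3),(i,n+4)}"
          using ij 2 unfolding gmap_def Fset_def by auto
        fix e assume e: "e \<in> gmap m n P \<and> v \<in> e"
        then have "e \<in> Fset m n" using notsh 2 unfolding gmap_def by blast
        then show "e = {(i,n+3),(i,n+4)}" using e ij 2 n unfolding Fset_def by auto
      qed
    next
      case 3
      have gv: "(i, j-2) \<in> grid_vertices m n" using ij 3 unfolding grid_vertices_def by auto
      then obtain e' where e': "e' \<in> P" "(i,j-2) \<in> e'"
        using P unfolding perfect_matchings_def by blast
      have uq: "\<And>e''. e'' \<in> P \<Longrightarrow> (i,j-2) \<in> e'' \<Longrightarrow> e'' = e'"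
        using pm_disj[OF P _ e'(1) _ e'(2) gv] by blast
      show ?thesis
      proof (rule ex1I[of _ "shiftE 2 e'"])
        show "shiftE 2 e' \<in> gmap m n P \<and> v \<in> shiftE 2 e'"
          using e' ij 3 unfolding gmap_def by (auto simp: mem_shift)
        fix e assume e: "e \<in> gmap m n P \<and> v \<in> e"
        have "e \<notin> Fset m n" using e ij 3 unfolding Fset_def by auto
        then obtain e'' where "e'' \<in> P" "e = shiftE 2 e''" using e unfolding gmap_def by blast
        then show "e = shiftE 2 e'" using uq e ij by (auto simp: mem_shift)
      qed
    qed
  qed
  show ?thesis unfolding perfect_matchings_def using sub cov by blast
qed




lemma Fset_mem1: "1\<le>i \<Longrightarrow> i\<le>m \<Longrightarrow> {(i,1),(i,2)} \<in> Fset m n"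
  unfolding Fset_def by blast
lemma Fset_mem2: "1\<le>i \<Longrightarrow> i\<le>m \<Longrightarrow> {(i,n+3),(i,n+4)} \<in> Fset m n"
  unfolding Fset_def by blast
lemma Fset_cases: "e \<in> Fset m n \<Longrightarrow> \<exists>i. 1\<le>i \<and> i\<le>m \<and> (e = {(i,1),(i,2)} \<or> e = {(i,n+3),(i,n+4)})"
  unfolding Fset_def by blast

context
  fixes m n :: nat and M
  assumes M: "M \<in> perfect_matchings (grid_vertices m (n+4)) (horiz_edges m (n+4) \<union> vert_edges m (n+4) {2..n+3})"
  and n: "n \<ge> 1"
begin

lemma ME: "M \<subseteq> horiz_edges m (n+4) \<union> vert_edges m (n+4) {2..n+3}"
  using M unfolding perfect_matchings_def by blast

lemma cover: "v \<in> grid_vertices m (n+4) \<Longrightarrow> \<exists>e\<in>M. v \<in> e"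
  using M unfolding perfect_matchings_def by blast

lemma uniq: "e1 \<in> M \<Longrightarrow> e2 \<in> M \<Longrightarrow> v \<in> e1 \<Longrightarrow> v \<in> e2 \<Longrightarrow> v \<in> grid_vertices m (n+4) \<Longrightarrow> e1 = e2"
  using pm_disj[OF M] by blast

lemma forced1: assumes "1 \<le> i" "i \<le> m" shows "{(i,1),(i,2)} \<in> M"
proof -
  have "(i,1) \<in> grid_vertices m (n+4)" using assms unfolding grid_vertices_def by auto
  then obtain e where e: "e \<in> M" "(i,1) \<in> e" using cover by blast
  then have "e \<in> horiz_edges m (n+4) \<union> vert_edges m (n+4) {2..n+3}" using ME by blast
  then have "e = {(i,1),(i,2)}"
  proof (cases rule: E'_cases)
    case (1 a b)
    then show ?thesis using e(2) by auto
  next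
    case (2 a b)
    then show ?thesis using e(2) by auto
  qed
  then show ?thesis using e by simp
qed

lemma forced2: assumes "1 \<le> i" "i \<le> m" shows "{(i,n+3),(i,n+4)} \<in> M"
proof -
  have "(i,n+4) \<in> grid_vertices m (n+4)" using assms unfolding grid_vertices_def by auto
  then obtain e where e: "e \<in> M" "(i,n+4) \<in> e" using cover by blast
  then have "e \<in> horiz_edges m (n+4) \<union> vert_edges m (n+4) {2..n+3}" using ME by blast
  then have "e = {(i,n+3),(i,n+4)}"
  proof (cases rule: E'_cases)
    case (1 a b)
    then show ?thesis using e(2) by auto
  next
    case (2 a b)
    then show ?thesis using e(2) by auto
  qed
  then show ?thesis using e by simp
qed

lemma Fsub: "Fset m n \<subseteq> M"
proof
  fix e assume "e \<in> Fset m n"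
  from Fset_cases[OF this] obtain i where i: "1\<le>i \<and> i\<le>m \<and> (e = {(i,1),(i,2)} \<or> e = {(i,n+3),(i,n+4)})" ..
  then show "e \<in> M" using forced1[of i] forced2[of i] by auto
qed

lemma edge_split: assumes e: "e \<in> M" shows "e \<in> Fset m n \<or> (mid n e \<and> e \<in> horiz_edges m (n+4) \<union> vert_edges m (n+4) {2..n+3})"
proof -
  have eE: "e \<in> horiz_edges m (n+4) \<union> vert_edges m (n+4) {2..n+3}" using ME e by blast
  then show ?thesis
  proof (cases rule: E'_cases)
    case (1 a b)
    note ab = 1
    consider "b = 1" | "b = n+3" | "b = 2" | "b = n+2" | "3 \<le> b" "b \<le> n+1" using ab by linarith
    then show ?thesis
    proof cases
      case 1 then show ?thesis using ab(1) Fset_mem1[OF ab(2) ab(3), of n] by (simp add: numeral_2_eq_2)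
    next
      case 2 then show ?thesis using ab(1) Fset_mem2[OF ab(2) ab(3), of n] by (simp add: ac_simps)
    next
      case 3
      have v: "(a,2) \<in> grid_vertices m (n+4)" using ab(2) ab(3) unfolding grid_vertices_def by auto
      have "e = {(a,1),(a,2)}"
        by (rule uniq[OF e forced1[OF ab(2) ab(3)] _ _ v]) (use 3 ab(1) in auto)
      then show ?thesis using 3 ab(1) by (auto simp: doubleton_eq_iff)
    next
      case 4
      have v: "(a,n+3) \<in> grid_vertices m (n+4)" using ab(2) ab(3) unfolding grid_vertices_def by auto
      have "e = {(a,n+3),(a,n+4)}"
        by (rule uniq[OF e forced2[OF ab(2) ab(3)] _ _ v]) (use 4 ab(1) in auto)
      then show ?thesis using 4 ab(1) by (auto simp: doubleton_eq_iff)
    next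
      case 5 then show ?thesis using ab(1) eE unfolding mid_def by auto
    qed
  next
    case (2 a b)
    note ab = 2
    have bb: "2 \<le> b" "b \<le> n+3" using ab by auto
    consider "b = 2" | "b = n+3" | "3 \<le> b" "b \<le> n+2" using bb by linarith
    then show ?thesis
    proof cases
      case 1
      have v: "(a,2) \<in> grid_vertices m (n+4)" using ab(2) ab(3) unfolding grid_vertices_def by auto
      have "e = {(a,1),(a,2)}"
        by (rule uniq[OF e forced1[of a] _ _ v]) (use 1 ab(1) ab(2) ab(3) in auto)
      then show ?thesis using 1 ab(1) by (auto simp: doubleton_eq_iff)
    next
      case 2
      have v: "(a,n+3) \<in> grid_vertices m (n+4)" using ab(2) ab(3) unfolding grid_vertices_def by auto
      have "e = {(a,n+3),(a,n+4)}"
        by (rule uniq[OF e forced2[of a] _ _ v]) (use 2 ab(1) ab(2) ab(3) in auto)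
      then show ?thesis using 2 ab(1) by (auto simp: doubleton_eq_iff)
    next
      case 3 then show ?thesis using ab(1) eE unfolding mid_def by auto
    qed
  qed
qed

end




lemma fmap_pm:
  assumes M: "M \<in> perfect_matchings (grid_vertices m (n+4)) (horiz_edges m (n+4) \<union> vert_edges m (n+4) {2..n+3})"
  and n: "n \<ge> 1"
  shows "fmap n M \<in> perfect_matchings (grid_vertices m n) (grid_edges m n)"
proof -
  have sub: "fmap n M \<subseteq> grid_edges m n"
  proof
    fix e' assume "e' \<in> fmap n M"
    then obtain e where e: "e \<in> M" "mid n e" "e' = unshiftE 2 e" unfolding fmap_def by blast
    have "e \<in> horiz_edges m (n+4) \<union> vert_edges m (n+4) {2..n+3}" using ME[OF M n] e by blast
    then show "e' \<in> grid_edges m n"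
    proof (cases rule: E'_cases)
      case (1 a b)
      then have b: "3 \<le> b" "b+1 \<le> n+2" using e(2) unfolding mid_def by auto
      have bb: "b - Suc 0 = Suc (b - 2)" using b by arith
      have "e' = {(a,b-2),(a,(b-2)+1)}" using e(3) 1 b by (simp add: unshift2 bb)
      moreover have "{(a,b-2),(a,(b-2)+1)} \<in> horiz_edges m n" by (rule horiz_mem) (use 1 b in auto)
      ultimately show ?thesis unfolding grid_edges_def by blast
    next
      case (2 a b)
      then have b: "3 \<le> b" "b \<le> n+2" using e(2) unfolding mid_def by auto
      have "e' = {(a,b-2),(a+1,b-2)}" using e(3) 2 b by (simp add: unshift2)
      moreover have "{(a,b-2),(a+1,b-2)} \<in> vert_edges m n UNIV" by (rule vert_mem) (use 2 b in auto)
      ultimately show ?thesis unfolding grid_edges_def by blast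
    qed
  qed
  have cov: "\<exists>!e. e \<in> fmap n M \<and> v \<in> e" if v: "v \<in> grid_vertices m n" for v
  proof -
    obtain i j where ij: "v = (i,j)" "1 \<le> i" "i \<le> m" "1 \<le> j" "j \<le> n"
      using v unfolding grid_vertices_def by auto
    have v2: "(i,j+2) \<in> grid_vertices m (n+4)" using ij unfolding grid_vertices_def by auto
    then obtain e where e: "e \<in> M" "(i,j+2) \<in> e" using cover[OF M n] by blast
    have "e \<notin> Fset m n" using e(2) ij unfolding Fset_def by auto
    then have mide: "mid n e" using edge_split[OF M n e(1)] by blast
    then have ge: "\<forall>v\<in>e. 2 \<le> snd v" unfolding mid_def by auto
    show ?thesis
    proof (rule ex1I[of _ "unshiftE 2 e"])
      show "unshiftE 2 e \<in> fmap n M \<and> v \<in> unshiftE 2 e"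
        using e mide ij unfolding fmap_def by (auto simp: mem_unshift[OF ge])
      fix e1 assume e1: "e1 \<in> fmap n M \<and> v \<in> e1"
      then obtain e'' where e'': "e'' \<in> M" "mid n e''" "e1 = unshiftE 2 e''" unfolding fmap_def by blast
      then have ge'': "\<forall>v\<in>e''. 2 \<le> snd v" unfolding mid_def by auto
      have "(i,j+2) \<in> e''" using e1 e''(3) ij mem_unshift[OF ge''] by auto
      then have "e'' = e" using uniq[OF M n e''(1) e(1) _ e(2) v2] by blast
      then show "e1 = unshiftE 2 e" using e''(3) by simp
    qed
  qed
  show ?thesis unfolding perfect_matchings_def using sub cov by blast
qed

lemma fg:
  assumes P: "P \<in> perfect_matchings (grid_vertices m n) (grid_edges m n)" and n: "n \<ge> 1"
  shows "fmap n (gmap m n P) = P"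
proof -
  have PE: "P \<subseteq> grid_edges m n" using P unfolding perfect_matchings_def by blast
  have "{e \<in> gmap m n P. mid n e} = shiftE 2 ` P"
  proof
    show "{e \<in> gmap m n P. mid n e} \<subseteq> shiftE 2 ` P"
    proof
      fix e assume e: "e \<in> {e \<in> gmap m n P. mid n e}"
      have "e \<notin> Fset m n"
      proof
        assume "e \<in> Fset m n"
        then obtain i where "e = {(i,1),(i,2)} \<or> e = {(i,n+3),(i,n+4)}" unfolding Fset_def by blast
        then show False using e unfolding mid_def by auto
      qed
      then show "e \<in> shiftE 2 ` P" using e unfolding gmap_def by blast
    qed
    show "shiftE 2 ` P \<subseteq> {e \<in> gmap m n P. mid n e}"
    proof
      fix e assume "e \<in> shiftE 2 ` P"
      then obtain e' where e': "e' \<in> P" "e = shiftE 2 e'" by blast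
      have "mid n e" unfolding mid_def
      proof
        fix v assume "v \<in> e"
        then obtain a b where "v = (a,b)" "(a,b) \<in> e" by (cases v) auto
        then have "2 \<le> b" "(a, b-2) \<in> e'" using e' by (auto simp: mem_shift)
        then have "1 \<le> b - 2 \<and> b - 2 \<le> n" using grid_edge_cols[of e' m n "(a,b-2)"] PE e' by auto
        then show "3 \<le> snd v \<and> snd v \<le> n+2" using \<open>v = (a,b)\<close> \<open>2 \<le> b\<close> by auto
      qed
      then show "e \<in> {e \<in> gmap m n P. mid n e}" using e' unfolding gmap_def by blast
    qed
  qed
  then show ?thesis unfolding fmap_def by (simp add: image_image unshift_shift)
qed

lemma gf:
  assumes M: "M \<in> perfect_matchings (grid_vertices m (n+4)) (horiz_edges m (n+4) \<union> vert_edges m (n+4) {2..n+3})"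
  and n: "n \<ge> 1"
  shows "gmap m n (fmap n M) = M"
proof -
  have "(\<lambda>e. shiftE 2 (unshiftE 2 e)) ` {e\<in>M. mid n e} = (\<lambda>e. e) ` {e\<in>M. mid n e}"
  proof (rule image_cong[OF refl])
    fix e assume "e \<in> {e\<in>M. mid n e}"
    then have "\<forall>v\<in>e. 2 \<le> snd v" unfolding mid_def by auto
    then show "shiftE 2 (unshiftE 2 e) = e" by (rule shift_unshift)
  qed
  then have "shiftE 2 ` fmap n M = {e\<in>M. mid n e}" unfolding fmap_def image_image by simp
  then show ?thesis unfolding gmap_def using Fsub[OF M n] edge_split[OF M n] by blast
qed




theorem mainTheorem7:
  fixes m n :: nat
  assumes "m \<ge> 1" and "n \<ge> 1"
  shows "M_signed (calG m (-2 - int n)) = eps m n * int (T m n)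
         \<and> (\<forall>M\<in>signed_pms (calG m (-2 - int n)). matching_sign (calG m (-2 - int n)) M = eps m n)"
proof -
  define PM' where "PM' = perfect_matchings (grid_vertices m (n+4)) (horiz_edges m (n+4) \<union> vert_edges m (n+4) {2..n+3})"
  define PMg where "PMg = perfect_matchings (grid_vertices m n) (grid_edges m n)"
  have G1: "fst (calG m (-2 - int n)) = grid_vertices m (n+4)" by (simp add: calG_eq)
  have G2: "fst (snd (calG m (-2 - int n))) = horiz_edges m (n+4) \<union> vert_edges m (n+4) {2..n+3}"
    by (simp add: calG_eq)
  have G3: "snd (snd (calG m (-2 - int n))) = (\<lambda>e. if e \<in> horiz_edges m (n+4) then 1 else -1)"
    by (simp add: calG_eq)
  have sign: "\<forall>M\<in>PM'. matching_sign (calG m (-2 - int n)) M = eps m n"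
    unfolding matching_sign_def G3 PM'_def using sign_calG by blast
  have bij: "bij_betw (gmap m n) PMg PM'"
  proof (rule bij_betw_byWitness[where f'="fmap n"])
    show "\<forall>a\<in>PMg. fmap n (gmap m n a) = a" unfolding PMg_def using fg assms(2) by blast
    show "\<forall>a'\<in>PM'. gmap m n (fmap n a') = a'" unfolding PM'_def using gf assms(2) by blast
    show "gmap m n ` PMg \<subseteq> PM'" unfolding PMg_def PM'_def using gmap_pm assms(2) by blast
    show "fmap n ` PM' \<subseteq> PMg" unfolding PMg_def PM'_def using fmap_pm assms(2) by blast
  qed
  have card: "card PM' = T m n" unfolding T_def PMg_def[symmetric] using bij_betw_same_card[OF bij] by simp
  have "M_signed (calG m (-2 - int n)) = (\<Sum>M\<in>PM'. matching_sign (calG m (-2 - int n)) M)"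
    unfolding M_signed_def G1 G2 PM'_def by simp
  also have "\<dots> = (\<Sum>M\<in>PM'. eps m n)" using sign by simp
  also have "\<dots> = eps m n * int (T m n)" using card by simp
  finally have A: "M_signed (calG m (-2 - int n)) = eps m n * int (T m n)" .
  have "signed_pms (calG m (-2 - int n)) = PM'" unfolding signed_pms_def G1 G2 PM'_def by simp
  then show ?thesis using A sign by simp
qed


end
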